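(* Consider the deterministic dividend problem below with constants $k>0$, $\bar\mu>0$, $r>0$. For $\mu<0$ let $\tau_0(\mu)=\frac1k\ln\!\big(\frac{\bar\mu-\mu}{\bar\mu}\big)$ and $x_b(\mu)=-\bar\mu\,\tau_0(\mu)-\frac{\mu}{k}$; for $\mu\ge0$ let $\tau_0(\mu)=0$ and $x_b(\mu)=0$. Then: (a) for $\mu\ge0$ and $x\ge0$, $V(x,\mu)=x+\frac{\bar\mu}{r}+\frac{\mu-\bar\mu}{r+k}$, attained by paying $x$ at time $0$ and thereafter paying out earnings as they arrive ($L_t=x+\int_0^t\mu_s\,ds$); (b) for $\mu<0$: $V(x,\mu)=x$ if $x<x_b(\mu)$, and $V(x,\mu)=x+\max\{0,\;e^{-r\tau_0(\mu)}V(0,0)-x_b(\mu)\}$ if $x\ge x_b(\mu)$; (c) there exists $\mu^*<0$ such that $V(x,\mu)=x$ for all $x\ge0$ whenever $\mu\le\mu^*$ (immediate liquidation is optimal), while for $\mu\ge\mu^*$ and $x\ge x_b(\mu)$ it is optimal to pay $x-x_b(\mu)$ immediately and thereafter all earnings as they arrive, i.e. $L_t=x-x_b(\mu)+\int_{\tau_0(\mu)\wedge t}^t\mu_s\,ds$.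
   Context: Deterministic setting: the profitability is $\mu_t=\bar\mu+(\mu-\bar\mu)e^{-kt}$ (the solution of $d\mu_t=k(\bar\mu-\mu_t)dt$, $\mu_0=\mu\in\mathbb R$), and the cash reserves are $X_t=x+\int_0^t\mu_s\,ds-L_t$ for $x\ge0$, where an admissible dividend process $L$ is a deterministic càdlàg nondecreasing function with $L_{0-}=0$ and $\Delta L_t\le X_{t-}$. The bankruptcy time is $\theta(L)=\inf\{t>0:X_t<0\}$, and $V(x,\mu)=\sup_L\int_0^{\theta(L)}e^{-rt}\,dL_t$ (including a possible jump at time $0$). *)

theory Defs
  imports "HOL-Analysis.Analysis"
begin

definition mu_path :: "real \<Rightarrow> real \<Rightarrow> real \<Rightarrow> real \<Rightarrow> real" where
  "mu_path k mb mu t = mb + (mu - mb) * exp (- k * t)"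

text \<open>Cash reserves X_t = x + int_0^t mu_s ds - L_t.  A dividend process is a function
  L on the reals with L t = 0 for t < 0 (so L_{0-} = 0 and L 0 is the jump at time 0).\<close>
definition reserves :: "real \<Rightarrow> real \<Rightarrow> real \<Rightarrow> real \<Rightarrow> (real \<Rightarrow> real) \<Rightarrow> real \<Rightarrow> real" where
  "reserves k mb mu x L t = x + integral {0..t} (mu_path k mb mu) - L t"

text \<open>Left limit X_{t-} (the earnings integral is continuous in t).\<close>
definition reserves_left :: "real \<Rightarrow> real \<Rightarrow> real \<Rightarrow> real \<Rightarrow> (real \<Rightarrow> real) \<Rightarrow> real \<Rightarrow> real" where
  "reserves_left k mb mu x L t = x + integral {0..t} (mu_path k mb mu) - Lim (at_left t) L"

text \<open>Bankruptcy time theta(L) = inf {t > 0. X_t < 0}, with inf of the empty set = infinity.\<close>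
definition bankruptcy :: "real \<Rightarrow> real \<Rightarrow> real \<Rightarrow> real \<Rightarrow> (real \<Rightarrow> real) \<Rightarrow> ereal" where
  "bankruptcy k mb mu x L = Inf {ereal t | t. 0 < t \<and> reserves k mb mu x L t < 0}"

text \<open>Admissible dividend processes: nondecreasing, cadlag (right-continuous; left limits
  exist by monotonicity), L_{0-} = 0, and Delta L_t \<le> X_{t-} for all times t \<ge> 0 up to
  (and including) bankruptcy.\<close>
definition admissible :: "real \<Rightarrow> real \<Rightarrow> real \<Rightarrow> real \<Rightarrow> (real \<Rightarrow> real) \<Rightarrow> bool" where
  "admissible k mb mu x L \<longleftrightarrow>
     mono L \<and> (\<forall>t<0. L t = 0) \<and> (\<forall>t. continuous (at_right t) L) \<and>
     (\<forall>t\<ge>0. ereal t \<le> bankruptcy k mb mu x L \<longrightarrow>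
        L t - Lim (at_left t) L \<le> reserves_left k mb mu x L t)"

text \<open>Payoff int_{[0, theta]} e^{-r t} dL_t as a Lebesgue--Stieltjes integral w.r.t. the
  measure induced by L (this includes the jump at time 0, since L = 0 on negative times).\<close>
definition payoff :: "real \<Rightarrow> real \<Rightarrow> real \<Rightarrow> real \<Rightarrow> real \<Rightarrow> (real \<Rightarrow> real) \<Rightarrow> ennreal" where
  "payoff r k mb mu x L =
     (\<integral>\<^sup>+ t. ennreal (exp (- r * t)) * indicator {t. 0 \<le> t \<and> ereal t \<le> bankruptcy k mb mu x L} t
        \<partial>interval_measure L)"

definition value_fn :: "real \<Rightarrow> real \<Rightarrow> real \<Rightarrow> real \<Rightarrow> real \<Rightarrow> ennreal" where
  "value_fn r k mb x mu = (SUP L \<in> {L. admissible k mb mu x L}. payoff r k mb mu x L)"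

definition tau0 :: "real \<Rightarrow> real \<Rightarrow> real \<Rightarrow> real" where
  "tau0 k mb mu = (if mu < 0 then (1 / k) * ln ((mb - mu) / mb) else 0)"

definition xb :: "real \<Rightarrow> real \<Rightarrow> real \<Rightarrow> real" where
  "xb k mb mu = (if mu < 0 then - mb * tau0 k mb mu - mu / k else 0)"

definition barrier_strategy :: "real \<Rightarrow> real \<Rightarrow> real \<Rightarrow> real \<Rightarrow> real \<Rightarrow> real" where
  "barrier_strategy k mb mu x t =
     (if t < 0 then 0
      else x - xb k mb mu + integral {min (tau0 k mb mu) t..t} (mu_path k mb mu))"

end

theory Submission
  imports Defs "HOL-Real_Asymp.Real_Asymp"
begin


lemma exp_as_integral:
  fixes r t :: real assumes "r > 0"
  shows "ennreal (exp (- r * t)) = (\<integral>\<^sup>+ s. ennreal (r * exp (- r * s)) * indicator {t..} s \<partial>lborel)"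
proof -
  have "(\<integral>\<^sup>+ s. ennreal (r * exp (- r * s)) * indicator {t..} s \<partial>lborel) = 0 - (- exp (- r * t))"
    apply (rule nn_integral_FTC_atLeast[where F="\<lambda>s. - exp (- r * s)"])
    using assms apply (auto intro!: derivative_eq_intros)
    using assms by real_asymp
  then show ?thesis by simp
qed

lemma emeasure_Icc0:
  fixes L :: "real \<Rightarrow> real"
  assumes mono: "mono L" and z: "\<forall>t<0. L t = 0" and rc: "\<forall>t. continuous (at_right t) L"
    and c: "0 \<le> c"
  shows "emeasure (interval_measure L) {0..c} = ennreal (L c)"
proof -
  let ?M = "interval_measure L"
  have monoL: "\<And>x y. x \<le> y \<Longrightarrow> L x \<le> L y" using mono by (simp add: monoD)
  have rc': "\<And>a. continuous (at_right a) L" using rc by blast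
  have N: "{-1<..<0::real} = (\<Union>n. {-1<..-1/real (Suc n)})"
  proof (rule set_eqI, rule iffI)
    fix t :: real assume "t \<in> {-1<..<0::real}"
    then have t: "-1 < t" "t < 0" by auto
    obtain n where "1 / real (Suc n) < -t" using reals_Archimedean[of "-t"] t by (auto simp: inverse_eq_divide)
    then have "t \<le> -1/real (Suc n)" by (simp add: field_simps)
    then show "t \<in> (\<Union>n. {-1<..-1/real (Suc n)})" using t by auto
  next
    fix t assume "t \<in> (\<Union>n. {-1<..-1/real (Suc n)})"
    then obtain n where "t \<in> {-1<..-1/real (Suc n)}" by auto
    then have a: "-1 < t" "t \<le> -1/real (Suc n)" by auto
    have "-1/real (Suc n) < 0" by simp
    then have "t < 0" using a(2) by linarith
    then show "t \<in> {-1<..<0::real}" using a by auto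
  qed
  have "emeasure ?M (\<Union>n. {-1<..-1/real (Suc n)}) = 0"
  proof (rule emeasure_UN_eq_0)
    fix n
    have "emeasure ?M {-1<..-1/real (Suc n)} = L (-1/real (Suc n)) - L (-1)"
      by (rule emeasure_interval_measure_Ioc[OF _ monoL rc']) (auto simp: field_simps)
    also have "\<dots> = 0" using z by simp
    finally show "emeasure ?M {-1<..-1/real (Suc n)} = 0" .
  qed auto
  then have null: "{-1<..<0::real} \<in> null_sets ?M" using N by (auto simp: null_sets_def)
  have "{0..c} = {-1<..c} - {-1<..<0}" using c by auto
  then have "emeasure ?M {0..c} = emeasure ?M {-1<..c}"
    using emeasure_Diff_null_set[OF null, of "{-1<..c}"] by simp
  also have "\<dots> = L c - L (-1)"
    by (rule emeasure_interval_measure_Ioc[OF _ monoL rc']) (use c in auto)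
  finally show ?thesis using z by simp
qed



definition Ltr :: "(real \<Rightarrow> real) \<Rightarrow> ereal \<Rightarrow> real \<Rightarrow> real" where
  "Ltr L \<theta> s = (if s < 0 then 0 else L (real_of_ereal (min (ereal s) \<theta>)))"

lemma meas_test:
  fixes \<theta> :: ereal
  shows "(\<lambda>(t, s). ennreal (r * exp (- r * s)) * indicator {t..} s * indicator {t. 0 \<le> t \<and> ereal t \<le> \<theta>} t)
     \<in> borel_measurable (interval_measure L \<Otimes>\<^sub>M lborel)"
proof -
  have eq: "(\<lambda>(t, s). ennreal (r * exp (- r * s)) * indicator {t..} s * indicator {t. 0 \<le> t \<and> ereal t \<le> \<theta>} t)
    = (\<lambda>p. ennreal (r * exp (- r * snd p)) * indicator {p. fst p \<le> snd p \<and> 0 \<le> fst p \<and> ereal (fst p) \<le> \<theta>} p)"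
    by (auto simp: fun_eq_iff split: split_indicator)
  have "Measurable.pred (interval_measure L \<Otimes>\<^sub>M lborel) (\<lambda>p. fst p \<le> snd p \<and> 0 \<le> fst p \<and> ereal (fst p) \<le> \<theta>)"
    by measurable
  then have [measurable]: "{p. fst p \<le> snd p \<and> 0 \<le> fst p \<and> ereal (fst p) \<le> \<theta>} \<in> sets (interval_measure L \<Otimes>\<^sub>M lborel)"
    by (simp add: pred_def space_pair_measure)
  show ?thesis unfolding eq by measurable
qed

lemma set_trunc:
  fixes \<theta> :: ereal assumes "0 \<le> \<theta>" "0 \<le> s"
  shows "{t. 0 \<le> t \<and> ereal t \<le> \<theta> \<and> t \<le> s} = {0..real_of_ereal (min (ereal s) \<theta>)}"
    and "0 \<le> real_of_ereal (min (ereal s) \<theta>)"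
    and "real_of_ereal (min (ereal s) \<theta>) \<le> s"
    and "ereal (real_of_ereal (min (ereal s) \<theta>)) \<le> \<theta>"
  using assms by (cases \<theta>; auto simp: min_def)+

lemma payoff_formula:
  fixes L :: "real \<Rightarrow> real" and \<theta> :: ereal
  assumes mono: "mono L" and z: "\<forall>t<0. L t = 0" and rc: "\<forall>t. continuous (at_right t) L"
    and r: "r > 0" and th: "0 \<le> \<theta>"
  shows "(\<integral>\<^sup>+ t. ennreal (exp (- r * t)) * indicator {t. 0 \<le> t \<and> ereal t \<le> \<theta>} t \<partial>interval_measure L)
     = (\<integral>\<^sup>+ s. ennreal (r * exp (- r * s)) * ennreal (Ltr L \<theta> s) \<partial>lborel)"
proof -
  let ?M = "interval_measure L"
  let ?A = "{t. 0 \<le> t \<and> ereal t \<le> \<theta>}"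
  let ?F = "\<lambda>t s. ennreal (r * exp (- r * s)) * indicator {t..} s * indicator ?A t"
  have monoL: "\<And>x y. x \<le> y \<Longrightarrow> L x \<le> L y" using mono by (simp add: monoD)
  have rc': "\<And>a. continuous (at_right a) L" using rc by blast
  interpret M: sigma_finite_measure ?M by (rule sigma_finite_interval_measure[OF monoL rc'])
  interpret pair_sigma_finite ?M lborel ..
  have 1: "ennreal (exp (- r * t)) * indicator ?A t = (\<integral>\<^sup>+ s. ?F t s \<partial>lborel)" for t
  proof -
    have "ennreal (exp (- r * t)) * indicator ?A t
       = (\<integral>\<^sup>+ s. ennreal (r * exp (- r * s)) * indicator {t..} s \<partial>lborel) * indicator ?A t"
      using exp_as_integral[OF r, of t] by simp
    also have "\<dots> = (\<integral>\<^sup>+ s. ?F t s \<partial>lborel)"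
      by (rule nn_integral_multc[symmetric]) measurable
    finally show ?thesis .
  qed
  have 2: "(\<integral>\<^sup>+ t. ?F t s \<partial>?M) = ennreal (r * exp (- r * s)) * ennreal (Ltr L \<theta> s)" for s
  proof -
    have "Measurable.pred ?M (\<lambda>t. 0 \<le> t \<and> ereal t \<le> \<theta> \<and> t \<le> s)" by measurable
    then have S: "{t. 0 \<le> t \<and> ereal t \<le> \<theta> \<and> t \<le> s} \<in> sets ?M" by (simp add: pred_def)
    have "(\<integral>\<^sup>+ t. ?F t s \<partial>?M) = (\<integral>\<^sup>+ t. ennreal (r * exp (- r * s)) * indicator {t. 0 \<le> t \<and> ereal t \<le> \<theta> \<and> t \<le> s} t \<partial>?M)"
      by (intro nn_integral_cong) (auto split: split_indicator)
    also have "\<dots> = ennreal (r * exp (- r * s)) * emeasure ?M {t. 0 \<le> t \<and> ereal t \<le> \<theta> \<and> t \<le> s}"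
      using S by (subst nn_integral_cmult) auto
    also have "emeasure ?M {t. 0 \<le> t \<and> ereal t \<le> \<theta> \<and> t \<le> s} = ennreal (Ltr L \<theta> s)"
    proof (cases "s < 0")
      case True
      then have e: "{t. 0 \<le> t \<and> ereal t \<le> \<theta> \<and> t \<le> s} = {}" by auto
      show ?thesis unfolding e using True by (simp add: Ltr_def)
    next
      case False
      then show ?thesis
        using set_trunc[OF th, of s] emeasure_Icc0[OF mono z rc]
        by (simp add: Ltr_def)
    qed
    finally show ?thesis .
  qed
  have meas: "case_prod ?F \<in> borel_measurable (?M \<Otimes>\<^sub>M lborel)" by (rule meas_test)
  have "(\<integral>\<^sup>+ t. ennreal (exp (- r * t)) * indicator ?A t \<partial>?M) = (\<integral>\<^sup>+ t. (\<integral>\<^sup>+ s. ?F t s \<partial>lborel) \<partial>?M)"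
    using 1 by simp
  also have "\<dots> = (\<integral>\<^sup>+ s. (\<integral>\<^sup>+ t. ?F t s \<partial>?M) \<partial>lborel)"
    by (rule Fubini'[OF meas, symmetric])
  also have "\<dots> = (\<integral>\<^sup>+ s. ennreal (r * exp (- r * s)) * ennreal (Ltr L \<theta> s) \<partial>lborel)"
    using 2 by simp
  finally show ?thesis .
qed



definition Ic :: "real \<Rightarrow> real \<Rightarrow> real \<Rightarrow> real \<Rightarrow> real" where
  "Ic k mb mu t = mb * t + (mu - mb) * (1 - exp (- k * t)) / k"

lemma Ic_deriv: "k \<noteq> 0 \<Longrightarrow> (Ic k mb mu has_real_derivative mu_path k mb mu t) (at t)"
  unfolding Ic_def mu_path_def
  by (auto intro!: derivative_eq_intros simp: field_simps)

lemma Ic_0 [simp]: "Ic k mb mu 0 = 0" by (simp add: Ic_def)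

lemma integral_mu_path:
  assumes "k \<noteq> 0" "a \<le> b"
  shows "integral {a..b} (mu_path k mb mu) = Ic k mb mu b - Ic k mb mu a"
proof -
  have "(mu_path k mb mu has_integral (Ic k mb mu b - Ic k mb mu a)) {a..b}"
    apply (rule fundamental_theorem_of_calculus[OF assms(2)])
    using Ic_deriv[OF assms(1)]
    by (metis has_real_derivative_iff_has_vector_derivative has_vector_derivative_at_within)
  then show ?thesis by (rule integral_unique)
qed

lemma integral0_mu_path:
  assumes "k \<noteq> 0" "0 \<le> t"
  shows "integral {0..t} (mu_path k mb mu) = Ic k mb mu t"
  using integral_mu_path[OF assms] by simp

lemma Ic_mono:
  assumes "k \<noteq> 0" "a \<le> b" "\<And>t. a \<le> t \<Longrightarrow> t \<le> b \<Longrightarrow> mu_path k mb mu t \<ge> 0"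
  shows "Ic k mb mu a \<le> Ic k mb mu b"
  by (rule DERIV_nonneg_imp_nondecreasing[OF assms(2)]) (use Ic_deriv[OF assms(1)] assms(3) in blast)

lemma Ic_antimono:
  assumes "k \<noteq> 0" "a \<le> b" "\<And>t. a \<le> t \<Longrightarrow> t \<le> b \<Longrightarrow> mu_path k mb mu t \<le> 0"
  shows "Ic k mb mu b \<le> Ic k mb mu a"
  by (rule DERIV_nonpos_imp_nonincreasing[OF assms(2)]) (use Ic_deriv[OF assms(1)] assms(3) in blast)

lemma Ic_strict_anti:
  assumes "k \<noteq> 0" "a < b" "\<And>t. a \<le> t \<Longrightarrow> t \<le> b \<Longrightarrow> mu_path k mb mu t < 0"
  shows "Ic k mb mu b < Ic k mb mu a"
  by (rule DERIV_neg_imp_decreasing[OF assms(2)]) (use Ic_deriv[OF assms(1)] assms(3) in blast)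

lemma mu_path_nonneg_pos:
  assumes "k > 0" "mb > 0" "mu \<ge> 0" "t \<ge> 0"
  shows "mu_path k mb mu t \<ge> 0"
proof -
  have e: "exp (- k * t) \<le> 1" using assms by simp
  have "mu_path k mb mu t = mb * (1 - exp (- k * t)) + mu * exp (- k * t)"
    by (simp add: mu_path_def algebra_simps)
  also have "\<dots> \<ge> 0" using e assms by (intro add_nonneg_nonneg mult_nonneg_nonneg) auto
  finally show ?thesis .
qed

lemma exp_tau0:
  assumes "k > 0" "mb > 0" "mu < 0"
  shows "exp (- k * tau0 k mb mu) = mb / (mb - mu)"
proof -
  have "- k * tau0 k mb mu = - ln ((mb - mu) / mb)" using assms by (simp add: tau0_def)
  moreover have "(mb - mu) / mb > 0" using assms by simp
  ultimately show ?thesis using assms by (simp add: exp_minus)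
qed

lemma tau0_pos:
  assumes "k > 0" "mb > 0" "mu < 0"
  shows "tau0 k mb mu > 0"
proof -
  have "(mb - mu) / mb > 1" using assms by (simp add: field_simps)
  then have "ln ((mb - mu) / mb) > 0" by simp
  then show ?thesis using assms by (simp add: tau0_def)
qed

lemma mu_path_sign:
  assumes "k > 0" "mb > 0" "mu < 0"
  shows "t \<le> tau0 k mb mu \<Longrightarrow> mu_path k mb mu t \<le> 0"
    and "t < tau0 k mb mu \<Longrightarrow> mu_path k mb mu t < 0"
    and "tau0 k mb mu \<le> t \<Longrightarrow> mu_path k mb mu t \<ge> 0"
proof -
  let ?T = "tau0 k mb mu"
  have eT: "(mu - mb) * exp (- k * ?T) = - mb" using exp_tau0[OF assms] assms by (simp add: field_simps)
  have mp: "mu_path k mb mu t = mb + (mu - mb) * exp (- k * t)" by (simp add: mu_path_def)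
  have neg: "mu - mb < 0" using assms by simp
  show "t \<le> ?T \<Longrightarrow> mu_path k mb mu t \<le> 0"
  proof -
    assume "t \<le> ?T"
    then have "exp (- k * ?T) \<le> exp (- k * t)" using assms by simp
    then have "(mu - mb) * exp (- k * t) \<le> (mu - mb) * exp (- k * ?T)" using neg
      by (simp add: mult_left_mono_neg)
    then show ?thesis using eT mp by linarith
  qed
  show "t < ?T \<Longrightarrow> mu_path k mb mu t < 0"
  proof -
    assume "t < ?T"
    then have "exp (- k * ?T) < exp (- k * t)" using assms by simp
    then have "(mu - mb) * exp (- k * t) < (mu - mb) * exp (- k * ?T)" using neg
      by (simp add: mult_less_cancel_left_neg)
    then show ?thesis using eT mp by linarith
  qed
  show "?T \<le> t \<Longrightarrow> mu_path k mb mu t \<ge> 0"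
  proof -
    assume "?T \<le> t"
    then have "exp (- k * t) \<le> exp (- k * ?T)" using assms by simp
    then have "(mu - mb) * exp (- k * ?T) \<le> (mu - mb) * exp (- k * t)" using neg
      by (simp add: mult_left_mono_neg)
    then show ?thesis using eT mp by linarith
  qed
qed

lemma Ic_tau0:
  assumes "k > 0" "mb > 0" "mu < 0"
  shows "Ic k mb mu (tau0 k mb mu) = - xb k mb mu"
proof -
  have "Ic k mb mu (tau0 k mb mu) = mb * tau0 k mb mu + (mu - mb) * (1 - mb / (mb - mu)) / k"
    using exp_tau0[OF assms] by (simp add: Ic_def)
  also have "(mu - mb) * (1 - mb / (mb - mu)) = mu" using assms by (simp add: field_simps)
  finally show ?thesis using assms by (simp add: xb_def)
qed

lemma Ic_shift:
  assumes "k > 0" "mb > 0" "mu < 0"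
  shows "Ic k mb mu (tau0 k mb mu + s) - Ic k mb mu (tau0 k mb mu) = Ic k mb 0 s"
proof -
  let ?T = "tau0 k mb mu"
  have eT: "(mu - mb) * exp (- k * ?T) = - mb" using exp_tau0[OF assms] assms by (simp add: field_simps)
  have "exp (- k * (?T + s)) = exp (- k * ?T) * exp (- k * s)" by (simp add: algebra_simps exp_add[symmetric])
  then have "Ic k mb mu (?T + s) - Ic k mb mu ?T = mb * s + ((mu - mb) * exp (- k * ?T)) * (1 - exp (- k * s)) / k"
    using assms by (simp add: Ic_def field_simps)
  also have "\<dots> = Ic k mb 0 s" unfolding eT by (simp add: Ic_def)
  finally show ?thesis .
qed



lemma bk_nonneg: "0 \<le> bankruptcy k mb mu x L"
  unfolding bankruptcy_def by (rule Inf_greatest) auto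

lemma bk_le: "0 < t \<Longrightarrow> reserves k mb mu x L t < 0 \<Longrightarrow> bankruptcy k mb mu x L \<le> ereal t"
  unfolding bankruptcy_def by (rule Inf_lower) auto

lemma bk_inf: "(\<And>t. 0 < t \<Longrightarrow> reserves k mb mu x L t \<ge> 0) \<Longrightarrow> bankruptcy k mb mu x L = \<infinity>"
  unfolding bankruptcy_def
proof -
  assume a: "\<And>t. 0 < t \<Longrightarrow> reserves k mb mu x L t \<ge> 0"
  have "\<not> (0 < t \<and> reserves k mb mu x L t < 0)" for t using a[of t] by linarith
  then have e: "{ereal t |t. 0 < t \<and> reserves k mb mu x L t < 0} = {}" by blast
  show "Inf {ereal t |t. 0 < t \<and> reserves k mb mu x L t < 0} = \<infinity>" unfolding e by (simp add: top_ereal_def)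
qed

lemma adm_bound:
  assumes "admissible k mb mu x L" "0 \<le> t" "ereal t \<le> bankruptcy k mb mu x L"
  shows "L t \<le> x + integral {0..t} (mu_path k mb mu)"
  using assms unfolding admissible_def reserves_left_def by force

lemma adm_nonneg:
  assumes "admissible k mb mu x L"
  shows "0 \<le> L t"
proof -
  have "mono L" "\<forall>t<0. L t = 0" using assms by (auto simp: admissible_def)
  then show ?thesis
    by (cases "t < 0") (auto dest: monoD[of L "-1" t])
qed

lemma payoff_adm:
  assumes "admissible k mb mu x L" "r > 0"
  shows "payoff r k mb mu x L
    = (\<integral>\<^sup>+ s. ennreal (r * exp (- r * s)) * ennreal (Ltr L (bankruptcy k mb mu x L) s) \<partial>lborel)"
  unfolding payoff_def
  by (rule payoff_formula) (use assms bk_nonneg in \<open>auto simp: admissible_def\<close>)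

lemma Ltr_obtain:
  assumes "admissible k mb mu x L" "0 \<le> s"
  obtains c where "0 \<le> c" "c \<le> s" "ereal c \<le> bankruptcy k mb mu x L"
    "Ltr L (bankruptcy k mb mu x L) s = L c"
  using set_trunc(2-4)[OF bk_nonneg assms(2), of k mb mu x L] assms(2)
  by (auto simp: Ltr_def)

lemma payoff_integral_formula:
  assumes k: "k > 0" and r: "r > 0" and nn: "\<And>s. 0 \<le> s \<Longrightarrow> 0 \<le> x + Ic k mb mu s"
  shows "(\<integral>\<^sup>+ s. ennreal (r * exp (- r * s)) * ennreal (if s < 0 then 0 else x + Ic k mb mu s) \<partial>lborel)
     = ennreal (x + mb / r + (mu - mb) / (r + k))"
proof -
  define c where "c = (mu - mb) / k"
  define f where "f s = r * exp (- r * s) * (x + Ic k mb mu s)" for s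
  define \<alpha> where "\<alpha> = - (x + c) - mb / r"
  define \<gamma> where "\<gamma> = c * r / (r + k)"
  have ar: "\<alpha> * r = - (r * (x + c) + mb)" using r by (simp add: \<alpha>_def field_simps)
  have gr: "\<gamma> * (r + k) = c * r" using r k by (simp add: \<gamma>_def field_simps)
  define F where "F s = \<alpha> * exp (- r * s) + (- mb) * (s * exp (- r * s)) + \<gamma> * exp (- (r + k) * s)" for s
  have "(\<integral>\<^sup>+ s. ennreal (r * exp (- r * s)) * ennreal (if s < 0 then 0 else x + Ic k mb mu s) \<partial>lborel)
      = (\<integral>\<^sup>+ s. ennreal (f s) * indicator {0..} s \<partial>lborel)"
  proof (intro nn_integral_cong)
    fix s :: real
    show "ennreal (r * exp (- r * s)) * ennreal (if s < 0 then 0 else x + Ic k mb mu s) = ennreal (f s) * indicator {0..} s"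
    proof (cases "s < 0")
      case False
      then show ?thesis using nn[of s] r by (simp add: f_def ennreal_mult)
    qed simp
  qed
  also have "\<dots> = 0 - F 0"
  proof (rule nn_integral_FTC_atLeast)
    show "f \<in> borel_measurable borel" unfolding f_def Ic_def by measurable
    show "DERIV F s :> f s" for s
    proof -
      have D: "DERIV F s :> \<alpha> * (- r * exp (- r * s)) + (- mb) * (exp (- r * s) + s * (- r * exp (- r * s)))
          + \<gamma> * (- (r + k) * exp (- (r + k) * s))"
        unfolding F_def by (auto intro!: derivative_eq_intros)
      have AB: "exp (- (r + k) * s) = exp (- r * s) * exp (- k * s)"
        by (simp add: exp_add[symmetric] algebra_simps)
      have "\<alpha> * (- r * exp (- r * s)) + (- mb) * (exp (- r * s) + s * (- r * exp (- r * s)))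
          + \<gamma> * (- (r + k) * exp (- (r + k) * s))
          = - (\<alpha> * r) * exp (- r * s) - mb * exp (- r * s) + r * mb * s * exp (- r * s)
            - (\<gamma> * (r + k)) * (exp (- r * s) * exp (- k * s))"
        unfolding AB by (simp add: algebra_simps)
      also have "\<dots> = f s"
        unfolding ar gr f_def Ic_def c_def using k by (simp add: field_simps)
      finally show ?thesis using D by simp
    qed
    show "0 \<le> f s" if "0 \<le> s" for s using nn[OF that] r unfolding f_def by simp
    show "(F \<longlongrightarrow> 0) at_top"
    proof -
      have rk: "r + k > 0" using r k by simp
      have l1: "((\<lambda>s. exp (- r * s)) \<longlongrightarrow> 0) at_top" using r by real_asymp
      have l2: "((\<lambda>s. s * exp (- r * s)) \<longlongrightarrow> 0) at_top" using r by real_asymp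
      have l3: "((\<lambda>s. exp (- (r + k) * s)) \<longlongrightarrow> 0) at_top" using rk by real_asymp
      have "((\<lambda>s. \<alpha> * exp (- r * s) + (- mb) * (s * exp (- r * s)) + \<gamma> * exp (- (r + k) * s)) \<longlongrightarrow>
          \<alpha> * 0 + (- mb) * 0 + \<gamma> * 0) at_top"
        by (intro tendsto_intros l1 l2 l3)
      then show ?thesis unfolding F_def by simp
    qed
  qed
  also have "0 - F 0 = x + mb / r + (mu - mb) / (r + k)"
  proof -
    have rk: "r + k \<noteq> 0" using r k by simp
    have "0 - F 0 = x + mb / r + (c - c * r / (r + k))" unfolding F_def \<alpha>_def \<gamma>_def by simp
    also have "c - c * r / (r + k) = c * k / (r + k)" using rk by (simp add: field_simps)
    also have "c * k = mu - mb" using k by (simp add: c_def)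
    finally show ?thesis .
  qed
  finally show ?thesis .
qed



lemma admissibleI:
  assumes "mono L" "\<forall>t<0. L t = 0" "\<forall>t. continuous (at_right t) L"
    "\<And>t. 0 \<le> t \<Longrightarrow> ereal t \<le> bankruptcy k mb mu x L \<Longrightarrow> L t \<le> x + integral {0..t} (mu_path k mb mu)"
  shows "admissible k mb mu x L"
  using assms unfolding admissible_def reserves_left_def by force

lemma rc_piecewise:
  fixes g :: "real \<Rightarrow> real"
  assumes "\<And>t. isCont g t"
  shows "\<forall>t. continuous (at_right t) (\<lambda>t. if t < 0 then 0 else g t)"
proof
  fix t :: real
  let ?L = "\<lambda>t::real. if t < 0 then 0 else g t"
  show "continuous (at_right t) ?L"
  proof (cases "t < 0")
    case True
    have ev: "eventually (\<lambda>s. 0 = ?L s) (at_right t)"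
      using True unfolding eventually_at_right_field by (intro exI[of _ 0]) auto
    have "((\<lambda>s. 0::real) \<longlongrightarrow> 0) (at_right t)" by simp
    then have "(?L \<longlongrightarrow> 0) (at_right t)" using ev by (rule Lim_transform_eventually)
    then show ?thesis using True by (simp add: continuous_within)
  next
    case False
    have ev: "eventually (\<lambda>s. g s = ?L s) (at_right t)"
      using False unfolding eventually_at_right_field by (intro exI[of _ "t + 1"]) auto
    have "(g \<longlongrightarrow> g t) (at_right t)"
      using assms[of t] by (simp add: isCont_def filterlim_at_split)
    then have "(?L \<longlongrightarrow> g t) (at_right t)" using ev by (rule Lim_transform_eventually)
    then show ?thesis using False by (simp add: continuous_within)
  qed
qed

lemma mono_piecewise:
  assumes "\<And>a b. 0 \<le> a \<Longrightarrow> a \<le> b \<Longrightarrow> g a \<le> g b" "0 \<le> g 0"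
  shows "mono (\<lambda>t::real. if t < 0 then 0 else g t)"
proof (rule monoI)
  fix a b :: real assume ab: "a \<le> b"
  show "(if a < 0 then 0 else g a) \<le> (if b < 0 then 0 else g b)"
  proof (cases "a < 0")
    case True
    then show ?thesis using assms(1)[of 0 b] assms(2) ab by auto
  next
    case False
    then show ?thesis using assms(1)[of a b] ab by auto
  qed
qed

lemma value_le:
  assumes "\<And>L. admissible k mb mu x L \<Longrightarrow> payoff r k mb mu x L \<le> c"
  shows "value_fn r k mb x mu \<le> c"
  unfolding value_fn_def using assms by (auto intro!: SUP_least)

lemma value_ge:
  assumes "admissible k mb mu x L"
  shows "payoff r k mb mu x L \<le> value_fn r k mb x mu"
  unfolding value_fn_def using assms by (auto intro!: SUP_upper)

lemma Ic_cont: "k \<noteq> 0 \<Longrightarrow> isCont (Ic k mb mu) t"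
  using Ic_deriv DERIV_isCont by blast

lemma payoff_le_mono:
  assumes "\<And>s. 0 \<le> s \<Longrightarrow> f s \<le> g s" "\<And>s. s < 0 \<Longrightarrow> f s = 0"
  shows "(\<integral>\<^sup>+ s. ennreal (r * exp (- r * s)) * ennreal (f s) \<partial>lborel)
      \<le> (\<integral>\<^sup>+ s. ennreal (r * exp (- r * s)) * ennreal (if s < 0 then 0 else g s) \<partial>lborel)"
proof (rule nn_integral_mono)
  fix s :: real
  show "ennreal (r * exp (- r * s)) * ennreal (f s) \<le> ennreal (r * exp (- r * s)) * ennreal (if s < 0 then 0 else g s)"
  proof (cases "s < 0")
    case False
    then show ?thesis using assms(1)[of s] by (auto intro!: mult_left_mono ennreal_leI)
  next
    case True
    then show ?thesis using assms(2)[of s] by simp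
  qed
qed



lemma Ltr_neg: "s < 0 \<Longrightarrow> Ltr L \<theta> s = 0" by (simp add: Ltr_def)

lemma Ltr_inf: "Ltr L \<infinity> s = (if s < 0 then 0 else L s)" by (simp add: Ltr_def)

lemma adm_Ltr_bound:
  assumes adm: "admissible k mb mu x L" and k: "k > 0" and s: "0 \<le> s"
  obtains c where "0 \<le> c" "c \<le> s" "ereal c \<le> bankruptcy k mb mu x L"
    "Ltr L (bankruptcy k mb mu x L) s = L c" "L c \<le> x + Ic k mb mu c"
proof -
  obtain c where c: "0 \<le> c" "c \<le> s" "ereal c \<le> bankruptcy k mb mu x L"
    "Ltr L (bankruptcy k mb mu x L) s = L c"
    using Ltr_obtain[OF adm s] by blast
  have "L c \<le> x + Ic k mb mu c"
    using adm_bound[OF adm c(1) c(3)] integral0_mu_path[of k c mb mu] k c(1) by simp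
  then show ?thesis using c that by blast
qed

lemma part_a:
  assumes k: "k > 0" and mb: "mb > 0" and r: "r > 0" and mu: "mu \<ge> 0" and x: "x \<ge> 0"
  defines "L \<equiv> \<lambda>t. if t < 0 then 0 else x + integral {0..t} (mu_path k mb mu)"
  shows "admissible k mb mu x L"
    and "payoff r k mb mu x L = ennreal (x + mb / r + (mu - mb) / (r + k))"
    and "value_fn r k mb x mu = ennreal (x + mb / r + (mu - mb) / (r + k))"
proof -
  have knz: "k \<noteq> 0" using k by simp
  have Leq: "L = (\<lambda>t. if t < 0 then 0 else x + Ic k mb mu t)"
    unfolding L_def by (auto simp: fun_eq_iff integral0_mu_path[OF knz])
  have Icmono: "Ic k mb mu a \<le> Ic k mb mu b" if "0 \<le> a" "a \<le> b" for a b
    by (rule Ic_mono[OF knz that(2)]) (use mu_path_nonneg_pos[OF k mb mu] that in auto)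
  have Icnn: "0 \<le> Ic k mb mu s" if "0 \<le> s" for s using Icmono[of 0 s] that by simp
  have res: "reserves k mb mu x L t = 0" if "0 \<le> t" for t
    using that unfolding reserves_def L_def by simp
  have bk: "bankruptcy k mb mu x L = \<infinity>" by (rule bk_inf) (simp add: res)
  show adm: "admissible k mb mu x L"
  proof (rule admissibleI)
    show "mono L" unfolding Leq by (rule mono_piecewise) (use Icmono x in auto)
    show "\<forall>t<0. L t = 0" unfolding L_def by simp
    show "\<forall>t. continuous (at_right t) L" unfolding Leq
      by (rule rc_piecewise) (intro continuous_intros Ic_cont knz)
    show "L t \<le> x + integral {0..t} (mu_path k mb mu)" if "0 \<le> t" for t
      using that unfolding L_def by simp
  qed
  have formula: "(\<integral>\<^sup>+ s. ennreal (r * exp (- r * s)) * ennreal (if s < 0 then 0 else x + Ic k mb mu s) \<partial>lborel)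
     = ennreal (x + mb / r + (mu - mb) / (r + k))"
    by (rule payoff_integral_formula[OF k r]) (use Icnn x in auto)
  show pay: "payoff r k mb mu x L = ennreal (x + mb / r + (mu - mb) / (r + k))"
  proof -
    have "payoff r k mb mu x L = (\<integral>\<^sup>+ s. ennreal (r * exp (- r * s)) * ennreal (Ltr L \<infinity> s) \<partial>lborel)"
      using payoff_adm[OF adm r] bk by simp
    also have "\<dots> = (\<integral>\<^sup>+ s. ennreal (r * exp (- r * s)) * ennreal (if s < 0 then 0 else x + Ic k mb mu s) \<partial>lborel)"
      unfolding Ltr_inf Leq by (intro nn_integral_cong) simp
    finally show ?thesis using formula by simp
  qed
  show "value_fn r k mb x mu = ennreal (x + mb / r + (mu - mb) / (r + k))"
  proof (rule antisym)
    show "value_fn r k mb x mu \<le> ennreal (x + mb / r + (mu - mb) / (r + k))"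
    proof (rule value_le)
      fix L' assume adm': "admissible k mb mu x L'"
      have "payoff r k mb mu x L' \<le> (\<integral>\<^sup>+ s. ennreal (r * exp (- r * s)) * ennreal (if s < 0 then 0 else x + Ic k mb mu s) \<partial>lborel)"
        unfolding payoff_adm[OF adm' r]
      proof (rule payoff_le_mono)
        fix s :: real assume s: "0 \<le> s"
        obtain c where c: "0 \<le> c" "c \<le> s" "Ltr L' (bankruptcy k mb mu x L') s = L' c" "L' c \<le> x + Ic k mb mu c"
          using adm_Ltr_bound[OF adm' k s] by metis
        show "Ltr L' (bankruptcy k mb mu x L') s \<le> x + Ic k mb mu s"
          using c Icmono[of c s] by simp
      qed (rule Ltr_neg)
      then show "payoff r k mb mu x L' \<le> ennreal (x + mb / r + (mu - mb) / (r + k))" using formula by simp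
    qed
    show "ennreal (x + mb / r + (mu - mb) / (r + k)) \<le> value_fn r k mb x mu"
      using value_ge[OF adm, of r] pay by simp
  qed
qed



lemma const_integral:
  assumes r: "r > 0" and x: "0 \<le> x"
  shows "(\<integral>\<^sup>+ s. ennreal (r * exp (- r * s)) * ennreal (if s < 0 then 0 else x) \<partial>lborel) = ennreal x"
proof -
  have "(\<integral>\<^sup>+ s. ennreal (r * exp (- r * s)) * ennreal (if s < 0 then 0 else x) \<partial>lborel)
      = (\<integral>\<^sup>+ s. (ennreal (r * exp (- r * s)) * indicator {0..} s) * ennreal x \<partial>lborel)"
    by (intro nn_integral_cong) (auto split: split_indicator)
  also have "\<dots> = (\<integral>\<^sup>+ s. ennreal (r * exp (- r * s)) * indicator {0..} s \<partial>lborel) * ennreal x"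
    by (rule nn_integral_multc) measurable
  also have "(\<integral>\<^sup>+ s. ennreal (r * exp (- r * s)) * indicator {0..} s \<partial>lborel) = 1"
    using exp_as_integral[OF r, of 0] by simp
  finally show ?thesis by simp
qed

locale negmu =
  fixes k mb r mu :: real
  assumes k: "k > 0" and mb: "mb > 0" and r: "r > 0" and mu: "mu < 0"
begin

abbreviation "T \<equiv> tau0 k mb mu"
abbreviation "X \<equiv> xb k mb mu"
abbreviation "I \<equiv> Ic k mb mu"

lemma knz: "k \<noteq> 0" using k by simp
lemma T_pos: "T > 0" using tau0_pos[OF k mb mu] .
lemma I_T: "I T = - X" using Ic_tau0[OF k mb mu] .

lemma I_anti: "0 \<le> a \<Longrightarrow> a \<le> b \<Longrightarrow> b \<le> T \<Longrightarrow> I b \<le> I a"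
  by (rule Ic_antimono[OF knz]) (use mu_path_sign(1)[OF k mb mu] in auto)

lemma I_mono: "T \<le> a \<Longrightarrow> a \<le> b \<Longrightarrow> I a \<le> I b"
  by (rule Ic_mono[OF knz]) (use mu_path_sign(3)[OF k mb mu] in auto)

lemma I_le0: "0 \<le> c \<Longrightarrow> c \<le> T \<Longrightarrow> I c \<le> 0"
  using I_anti[of 0 c] by simp

lemma I_neg: "0 < s \<Longrightarrow> s < T \<Longrightarrow> I s < 0"
  using Ic_strict_anti[OF knz, of 0 s mb mu] mu_path_sign(2)[OF k mb mu] by fastforce

lemma X_pos: "X > 0"
proof -
  have "I T \<le> I (T / 2)" using I_anti[of "T/2" T] T_pos by simp
  also have "I (T / 2) < 0" using I_neg[of "T/2"] T_pos by simp
  finally show ?thesis using I_T by simp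
qed

lemma I0_nn: "0 \<le> s \<Longrightarrow> 0 \<le> Ic k mb 0 s"
  using Ic_mono[OF knz, of 0 s mb 0] mu_path_nonneg_pos[OF k mb, of 0] by simp

lemma liquidation:
  assumes x: "0 \<le> x"
  shows "admissible k mb mu x (\<lambda>t. if t < 0 then 0 else x)"
    and "payoff r k mb mu x (\<lambda>t. if t < 0 then 0 else x) = ennreal x"
proof -
  let ?L = "\<lambda>t::real. if t < 0 then 0 else x"
  show adm: "admissible k mb mu x ?L"
  proof (rule admissibleI)
    show "mono ?L" by (rule mono_piecewise) (use x in auto)
    show "\<forall>t<0. ?L t = 0" by simp
    show "\<forall>t. continuous (at_right t) ?L" by (rule rc_piecewise) simp
    fix t :: real assume t: "0 \<le> t" "ereal t \<le> bankruptcy k mb mu x ?L"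
    show "?L t \<le> x + integral {0..t} (mu_path k mb mu)"
    proof (cases "t = 0")
      case True then show ?thesis by simp
    next
      case False
      define s where "s = min t T / 2"
      have s: "0 < s" "s < T" "s < t" using False t T_pos by (auto simp: s_def)
      have "reserves k mb mu x ?L s = I s"
        using s unfolding reserves_def by (simp add: integral0_mu_path[OF knz])
      then have "reserves k mb mu x ?L s < 0" using I_neg[OF s(1,2)] by simp
      then have "bankruptcy k mb mu x ?L \<le> ereal s" using bk_le s by blast
      then show ?thesis using t s by (meson ereal_less_eq(3) le_less_trans not_le order_trans)
    qed
  qed
  have "payoff r k mb mu x ?L = (\<integral>\<^sup>+ s. ennreal (r * exp (- r * s)) * ennreal (if s < 0 then 0 else x) \<partial>lborel)"
    unfolding payoff_adm[OF adm r]
  proof (intro nn_integral_cong)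
    fix s :: real
    show "ennreal (r * exp (- r * s)) * ennreal (Ltr ?L (bankruptcy k mb mu x ?L) s)
        = ennreal (r * exp (- r * s)) * ennreal (if s < 0 then 0 else x)"
    proof (cases "s < 0")
      case True then show ?thesis by (simp add: Ltr_def)
    next
      case False
      then obtain c where "0 \<le> c" "Ltr ?L (bankruptcy k mb mu x ?L) s = ?L c"
        using Ltr_obtain[OF adm, of s] by (metis not_less)
      then show ?thesis using False by simp
    qed
  qed
  then show "payoff r k mb mu x ?L = ennreal x" using const_integral[OF r x] by simp
qed

end



context negmu begin

definition gb :: "real \<Rightarrow> real \<Rightarrow> real" where
  "gb x t = x - X + I t - I (min T t)"

lemma gb_ge: "0 \<le> t \<Longrightarrow> x - X \<le> gb x t"
  unfolding gb_def using I_mono[of T t] by (cases "t \<le> T") (auto simp: min_def)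

lemma gb_low: "0 \<le> t \<Longrightarrow> t \<le> T \<Longrightarrow> gb x t = x - X"
  unfolding gb_def by (simp add: min_def)

lemma gb_high: "T \<le> t \<Longrightarrow> gb x t = x + I t"
  unfolding gb_def using I_T by (simp add: min_def)

lemma gb_mono: "0 \<le> a \<Longrightarrow> a \<le> b \<Longrightarrow> gb x a \<le> gb x b"
proof -
  assume ab: "0 \<le> a" "a \<le> b"
  show ?thesis
  proof (cases "b \<le> T")
    case True then show ?thesis using ab gb_low[of a x] gb_low[of b x] by simp
  next
    case False
    show ?thesis
    proof (cases "a \<le> T")
      case True then show ?thesis using ab gb_low[of a x] gb_ge[of b x] by simp
    next
      case False
      then show ?thesis using ab gb_high[of a x] gb_high[of b x] I_mono[of a b] by simp
    qed
  qed
qed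

lemma barrier_eq: "barrier_strategy k mb mu x = (\<lambda>t. if t < 0 then 0 else gb x t)"
proof (rule ext)
  fix t :: real
  show "barrier_strategy k mb mu x t = (if t < 0 then 0 else gb x t)"
  proof (cases "t < 0")
    case False
    then have "min T t \<le> t" by simp
    then show ?thesis using False
      by (simp add: barrier_strategy_def gb_def integral_mu_path[OF knz])
  qed (simp add: barrier_strategy_def)
qed

lemma barrier_reserves: "0 \<le> t \<Longrightarrow> reserves k mb mu x (barrier_strategy k mb mu x) t = X + I (min T t)"
  unfolding reserves_def barrier_eq gb_def by (simp add: integral0_mu_path[OF knz])

lemma barrier_res_nn: "0 \<le> t \<Longrightarrow> 0 \<le> X + I (min T t)"
proof -
  assume t: "0 \<le> t"
  have "0 \<le> min T t" "min T t \<le> T" using t T_pos by auto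
  then have "I T \<le> I (min T t)" using I_anti by blast
  then show ?thesis using I_T by simp
qed

lemma barrier_bk: "bankruptcy k mb mu x (barrier_strategy k mb mu x) = \<infinity>"
  by (rule bk_inf) (simp add: barrier_reserves barrier_res_nn)

lemma barrier_adm:
  assumes x: "X \<le> x"
  shows "admissible k mb mu x (barrier_strategy k mb mu x)"
proof (rule admissibleI)
  show "mono (barrier_strategy k mb mu x)" unfolding barrier_eq
    by (rule mono_piecewise) (use gb_mono gb_ge[of 0 x] x in auto)
  show "\<forall>t<0. barrier_strategy k mb mu x t = 0" by (simp add: barrier_strategy_def)
  show "\<forall>t. continuous (at_right t) (barrier_strategy k mb mu x)" unfolding barrier_eq gb_def
    by (rule rc_piecewise) (intro continuous_intros Ic_cont[OF knz] isCont_o2[where g="I", OF _ Ic_cont[OF knz]])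
  fix t :: real assume t: "0 \<le> t"
  show "barrier_strategy k mb mu x t \<le> x + integral {0..t} (mu_path k mb mu)"
    using barrier_reserves[OF t, of x] barrier_res_nn[OF t] unfolding reserves_def by simp
qed

end



context negmu begin

lemma barrier_payoff:
  assumes x: "X \<le> x"
  shows "payoff r k mb mu x (barrier_strategy k mb mu x)
     = ennreal (x - X + exp (- r * T) * (mb / r + (0 - mb) / (r + k)))"
proof -
  define f1 where "f1 s = ennreal (r * exp (- r * s)) * ennreal (if s < 0 then 0 else x - X)" for s
  define f2 where "f2 s = ennreal (r * exp (- r * s)) * ennreal (if s < T then 0 else Ic k mb 0 (s - T))" for s
  have Vnn: "0 \<le> mb / r + (0 - mb) / (r + k)"
  proof -
    have "mb / (r + k) \<le> mb / r" using r k mb by (intro divide_left_mono) auto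
    then show ?thesis by simp
  qed
  have adm: "admissible k mb mu x (barrier_strategy k mb mu x)" by (rule barrier_adm[OF x])
  have "payoff r k mb mu x (barrier_strategy k mb mu x)
      = (\<integral>\<^sup>+ s. ennreal (r * exp (- r * s)) * ennreal (Ltr (barrier_strategy k mb mu x) \<infinity> s) \<partial>lborel)"
    using payoff_adm[OF adm r] barrier_bk by simp
  also have "\<dots> = (\<integral>\<^sup>+ s. f1 s + f2 s \<partial>lborel)"
  proof (intro nn_integral_cong)
    fix s :: real
    show "ennreal (r * exp (- r * s)) * ennreal (Ltr (barrier_strategy k mb mu x) \<infinity> s) = f1 s + f2 s"
    proof (cases "s < 0")
      case True
      then show ?thesis using T_pos by (simp add: Ltr_inf f1_def f2_def)
    next
      case False
      show ?thesis
      proof (cases "s < T")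
        case True
        then show ?thesis using False gb_low[of s x] by (simp add: Ltr_inf f1_def f2_def barrier_eq)
      next
        case False2: False
        have "gb x s = x + I s" using gb_high[of s x] False2 by simp
        also have "\<dots> = (x - X) + (I (T + (s - T)) - I T)" using I_T by simp
        also have "\<dots> = (x - X) + Ic k mb 0 (s - T)" using Ic_shift[OF k mb mu, of "s - T"] by simp
        finally have g: "gb x s = (x - X) + Ic k mb 0 (s - T)" .
        have nn: "0 \<le> x - X" "0 \<le> Ic k mb 0 (s - T)" using x I0_nn[of "s - T"] False2 by auto
        show ?thesis using False False2
          by (simp add: Ltr_inf f1_def f2_def barrier_eq g ennreal_plus[OF nn] distrib_left)
      qed
    qed
  qed
  also have "\<dots> = (\<integral>\<^sup>+ s. f1 s \<partial>lborel) + (\<integral>\<^sup>+ s. f2 s \<partial>lborel)"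
    by (rule nn_integral_add) (unfold f1_def f2_def Ic_def, measurable)
  also have "(\<integral>\<^sup>+ s. f1 s \<partial>lborel) = ennreal (x - X)"
    unfolding f1_def by (rule const_integral[OF r]) (use x in simp)
  also have "(\<integral>\<^sup>+ s. f2 s \<partial>lborel) = ennreal (exp (- r * T) * (mb / r + (0 - mb) / (r + k)))"
  proof -
    have m: "f2 \<in> borel_measurable borel" unfolding f2_def Ic_def by measurable
    have "(\<integral>\<^sup>+ s. f2 s \<partial>lborel) = ennreal \<bar>1\<bar> * (\<integral>\<^sup>+ u. f2 (T + 1 * u) \<partial>lborel)"
      by (rule nn_integral_real_affine[OF m]) simp
    also have "\<dots> = (\<integral>\<^sup>+ u. ennreal (exp (- r * T)) * (ennreal (r * exp (- r * u)) * ennreal (if u < 0 then 0 else 0 + Ic k mb 0 u)) \<partial>lborel)"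
    proof -
      have "f2 (T + 1 * u) = ennreal (exp (- r * T)) * (ennreal (r * exp (- r * u)) * ennreal (if u < 0 then 0 else 0 + Ic k mb 0 u))" for u
      proof -
        have "r * exp (- r * (T + u)) = exp (- r * T) * (r * exp (- r * u))"
          by (simp add: algebra_simps exp_add[symmetric])
        then show ?thesis unfolding f2_def using r by (simp add: ennreal_mult ac_simps)
      qed
      then show ?thesis by simp
    qed
    also have "\<dots> = ennreal (exp (- r * T)) * (\<integral>\<^sup>+ u. ennreal (r * exp (- r * u)) * ennreal (if u < 0 then 0 else 0 + Ic k mb 0 u) \<partial>lborel)"
      by (rule nn_integral_cmult) (unfold Ic_def, measurable)
    also have "(\<integral>\<^sup>+ u. ennreal (r * exp (- r * u)) * ennreal (if u < 0 then 0 else 0 + Ic k mb 0 u) \<partial>lborel)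
        = ennreal (0 + mb / r + (0 - mb) / (r + k))"
      by (rule payoff_integral_formula[OF k r]) (use I0_nn in simp)
    finally have "(\<integral>\<^sup>+ s. f2 s \<partial>lborel) = ennreal (exp (- r * T)) * ennreal (mb / r + (0 - mb) / (r + k))"
      by simp
    then show ?thesis using Vnn by (simp add: ennreal_mult)
  qed
  also have "ennreal (x - X) + ennreal (exp (- r * T) * (mb / r + (0 - mb) / (r + k)))
      = ennreal (x - X + exp (- r * T) * (mb / r + (0 - mb) / (r + k)))"
  proof -
    show ?thesis using x Vnn by (simp add: ennreal_plus)
  qed
  finally show ?thesis .
qed

end



context negmu begin

abbreviation "V0 \<equiv> mb / r + (0 - mb) / (r + k)"

lemma barrier_payoff_int:
  assumes x: "X \<le> x"
  shows "payoff r k mb mu x (barrier_strategy k mb mu x)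
     = (\<integral>\<^sup>+ s. ennreal (r * exp (- r * s)) * ennreal (if s < 0 then 0 else gb x s) \<partial>lborel)"
proof -
  have "payoff r k mb mu x (barrier_strategy k mb mu x)
      = (\<integral>\<^sup>+ s. ennreal (r * exp (- r * s)) * ennreal (Ltr (barrier_strategy k mb mu x) \<infinity> s) \<partial>lborel)"
    using payoff_adm[OF barrier_adm[OF x] r] barrier_bk by simp
  also have "\<dots> = (\<integral>\<^sup>+ s. ennreal (r * exp (- r * s)) * ennreal (if s < 0 then 0 else gb x s) \<partial>lborel)"
    by (intro nn_integral_cong) (simp add: Ltr_inf barrier_eq)
  finally show ?thesis .
qed

lemma upper1:
  assumes x: "0 \<le> x" and adm: "admissible k mb mu x L" and th: "ereal T \<le> bankruptcy k mb mu x L"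
  shows "X \<le> x" and "payoff r k mb mu x L \<le> ennreal (x - X + exp (- r * T) * V0)"
proof -
  have LT: "L T \<le> x - X"
    using adm_bound[OF adm _ th] T_pos integral0_mu_path[OF knz, of T mb mu] I_T by simp
  show X: "X \<le> x" using LT adm_nonneg[OF adm, of T] by simp
  have monoL: "mono L" using adm by (simp add: admissible_def)
  have "payoff r k mb mu x L \<le> (\<integral>\<^sup>+ s. ennreal (r * exp (- r * s)) * ennreal (if s < 0 then 0 else gb x s) \<partial>lborel)"
    unfolding payoff_adm[OF adm r]
  proof (rule payoff_le_mono)
    fix s :: real assume s: "0 \<le> s"
    obtain c where c: "0 \<le> c" "c \<le> s" "Ltr L (bankruptcy k mb mu x L) s = L c" "L c \<le> x + I c"
      using adm_Ltr_bound[OF adm k s] by metis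
    show "Ltr L (bankruptcy k mb mu x L) s \<le> gb x s"
    proof (cases "c \<le> T")
      case True
      then have "L c \<le> L T" using monoL by (simp add: monoD)
      then show ?thesis using c LT gb_ge[OF s, of x] by simp
    next
      case False
      then have "I c \<le> I s" using I_mono[of c s] c by simp
      moreover have "gb x s = x + I s" using gb_high[of s x] False c by simp
      ultimately show ?thesis using c by simp
    qed
  qed (rule Ltr_neg)
  then show "payoff r k mb mu x L \<le> ennreal (x - X + exp (- r * T) * V0)"
    using barrier_payoff_int[OF X] barrier_payoff[OF X] by simp
qed

lemma upper2:
  assumes x: "0 \<le> x" and adm: "admissible k mb mu x L" and th: "\<not> ereal T \<le> bankruptcy k mb mu x L"
  shows "payoff r k mb mu x L \<le> ennreal x"
proof -
  have "payoff r k mb mu x L \<le> (\<integral>\<^sup>+ s. ennreal (r * exp (- r * s)) * ennreal (if s < 0 then 0 else x) \<partial>lborel)"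
    unfolding payoff_adm[OF adm r]
  proof (rule payoff_le_mono)
    fix s :: real assume s: "0 \<le> s"
    obtain c where c: "0 \<le> c" "c \<le> s" "ereal c \<le> bankruptcy k mb mu x L"
      "Ltr L (bankruptcy k mb mu x L) s = L c" "L c \<le> x + I c"
      using adm_Ltr_bound[OF adm k s] by metis
    have "c < T" using c(3) th by (metis ereal_less_eq(3) not_le order_trans less_imp_le) 
    then have "I c \<le> 0" using I_le0[of c] c by simp
    then show "Ltr L (bankruptcy k mb mu x L) s \<le> x" using c by simp
  qed (rule Ltr_neg)
  then show ?thesis using const_integral[OF r x] by simp
qed

lemma value_small:
  assumes x: "0 \<le> x" "x < X"
  shows "value_fn r k mb x mu = ennreal x"
proof (rule antisym)
  show "value_fn r k mb x mu \<le> ennreal x"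
  proof (rule value_le)
    fix L assume adm: "admissible k mb mu x L"
    have "\<not> ereal T \<le> bankruptcy k mb mu x L" using upper1(1)[OF x(1) adm] x(2) by fastforce
    then show "payoff r k mb mu x L \<le> ennreal x" using upper2[OF x(1) adm] by simp
  qed
  show "ennreal x \<le> value_fn r k mb x mu"
    using value_ge[OF liquidation(1)[OF x(1)], of r] liquidation(2)[OF x(1)] by simp
qed

lemma value_large:
  assumes x: "X \<le> x"
  shows "value_fn r k mb x mu = ennreal (max x (x - X + exp (- r * T) * V0))"
proof -
  have x0: "0 \<le> x" using x X_pos by simp
  show ?thesis
  proof (rule antisym)
    show "value_fn r k mb x mu \<le> ennreal (max x (x - X + exp (- r * T) * V0))"
    proof (rule value_le)
      fix L assume adm: "admissible k mb mu x L"
      show "payoff r k mb mu x L \<le> ennreal (max x (x - X + exp (- r * T) * V0))"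
      proof (cases "ereal T \<le> bankruptcy k mb mu x L")
        case True
        then show ?thesis using upper1(2)[OF x0 adm True]
          by (meson ennreal_leI max.cobounded2 order_trans)
      next
        case False
        then show ?thesis using upper2[OF x0 adm False]
          by (meson ennreal_leI max.cobounded1 order_trans)
      qed
    qed
    have a: "ennreal x \<le> value_fn r k mb x mu"
      using value_ge[OF liquidation(1)[OF x0], of r] liquidation(2)[OF x0] by simp
    have b: "ennreal (x - X + exp (- r * T) * V0) \<le> value_fn r k mb x mu"
      using value_ge[OF barrier_adm[OF x], of r] barrier_payoff[OF x] by simp
    show "ennreal (max x (x - X + exp (- r * T) * V0)) \<le> value_fn r k mb x mu"
      using a b by (simp add: max_def)
  qed
qed

end



definition hh :: "real \<Rightarrow> real \<Rightarrow> real \<Rightarrow> real \<Rightarrow> real" where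
  "hh k mb r m = exp (- r * ((1 / k) * ln ((mb - m) / mb))) * (mb / r + (0 - mb) / (r + k))
     + mb * ((1 / k) * ln ((mb - m) / mb)) + m / k"

lemma V0_pos: fixes k mb r :: real shows "0 < k \<Longrightarrow> 0 < mb \<Longrightarrow> 0 < r \<Longrightarrow> 0 < mb / r + (0 - mb) / (r + k)"
proof -
  assume k: "0 < k" and mb: "0 < mb" and r: "0 < r"
  have "mb / (r + k) < mb / r" by (rule frac_less2) (use r k mb in auto)
  then show ?thesis by simp
qed

lemma hh_eq: "0 < k \<Longrightarrow> 0 < mb \<Longrightarrow> m < 0 \<Longrightarrow>
  hh k mb r m = exp (- r * tau0 k mb m) * (mb / r + (0 - mb) / (r + k)) - xb k mb m"
  unfolding hh_def tau0_def xb_def by simp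

lemma hh_0: "hh k mb r 0 = mb / r + (0 - mb) / (r + k)"
  unfolding hh_def by simp

lemma hh_mono:
  assumes k: "0 < k" and mb: "0 < mb" and r: "0 < r" and m: "m1 \<le> m2" "m2 \<le> 0"
  shows "hh k mb r m1 \<le> hh k mb r m2"
proof -
  let ?V = "mb / r + (0 - mb) / (r + k)"
  have p1: "0 < (mb - m1) / mb" and p2: "0 < (mb - m2) / mb" using m mb by auto
  have lnle: "ln ((mb - m2) / mb) \<le> ln ((mb - m1) / mb)" using p1 p2 m mb by (simp add: divide_right_mono)
  have "- r * ((1 / k) * ln ((mb - m1) / mb)) \<le> - r * ((1 / k) * ln ((mb - m2) / mb))"
    using lnle r k by (simp add: mult_left_mono divide_right_mono)
  then have e: "exp (- r * ((1 / k) * ln ((mb - m1) / mb))) * ?V \<le> exp (- r * ((1 / k) * ln ((mb - m2) / mb))) * ?V"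
    using V0_pos[OF k mb r] by (intro mult_right_mono) auto
  have e1: "(mb - m1) / (mb - m2) = ((mb - m1) / mb) / ((mb - m2) / mb)" using mb m by (simp add: field_simps)
  moreover have e2: "ln (((mb - m1) / mb) / ((mb - m2) / mb)) = ln ((mb - m1) / mb) - ln ((mb - m2) / mb)"
  proof -
    have ne: "(mb - m1) / mb \<noteq> 0" "(mb - m2) / mb \<noteq> 0" using p1 p2 by auto
    show ?thesis by (simp only: ln_div ne simp_thms if_True)
  qed
  ultimately have "ln ((mb - m1) / mb) - ln ((mb - m2) / mb) = ln ((mb - m1) / (mb - m2))"
    by (simp only: e1 e2)
  also have "\<dots> \<le> (mb - m1) / (mb - m2) - 1" using m mb by (intro ln_le_minus_one) auto
  also have "\<dots> = (m2 - m1) / (mb - m2)" using m mb by (simp add: field_simps)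
  also have "\<dots> \<le> (m2 - m1) / mb" using m mb by (intro divide_left_mono) auto
  finally have "mb * (ln ((mb - m1) / mb) - ln ((mb - m2) / mb)) \<le> m2 - m1"
    using mb by (simp add: field_simps)
  then have "(mb * ln ((mb - m1) / mb) + m1) / k \<le> (mb * ln ((mb - m2) / mb) + m2) / k"
    using k by (intro divide_right_mono) (auto simp: algebra_simps)
  moreover have eq: "mb * ((1 / k) * l) + m / k = (mb * l + m) / k" for l m
    using k by (simp add: field_simps)
  ultimately have "mb * ((1 / k) * ln ((mb - m1) / mb)) + m1 / k \<le> mb * ((1 / k) * ln ((mb - m2) / mb)) + m2 / k"
    by (simp only: eq)
  then show ?thesis unfolding hh_def using e by linarith
qed

lemma hh_cont:
  assumes "0 < k" "0 < mb" "m0 \<le> 0"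
  shows "continuous_on {m0..0} (hh k mb r)"
  unfolding hh_def using assms by (intro continuous_intros) auto

lemma hh_neg_exists:
  assumes k: "0 < k" and mb: "0 < mb" and r: "0 < r"
  shows "\<exists>m1<0. hh k mb r m1 < 0"
proof -
  let ?V = "mb / r + (0 - mb) / (r + k)"
  define a where "a = 4 * k * ?V / mb + 1"
  have Vp: "0 < ?V" using V0_pos[OF k mb r] .
  have a1: "1 \<le> a" using Vp k mb by (simp add: a_def)
  define m1 where "m1 = - mb * (exp a - 1)"
  have ea: "1 < exp a" using a1 by (simp add: one_less_exp_iff)
  have m1: "m1 < 0" using ea mb by (simp add: m1_def)
  have q: "(mb - m1) / mb = exp a" using mb by (simp add: m1_def field_simps)
  have "hh k mb r m1 = exp (- r * (a / k)) * ?V + mb * (a / k) - mb * (exp a - 1) / k"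
    unfolding hh_def q by (simp add: m1_def)
  also have "\<dots> \<le> ?V + mb * (a / k) - mb * (exp a - 1) / k"
  proof -
    have "exp (- r * (a / k)) \<le> 1" using r k a1 by simp
    then have "exp (- r * (a / k)) * ?V \<le> 1 * ?V" using Vp by (intro mult_right_mono) auto
    then show ?thesis by simp
  qed
  also have "\<dots> < 0"
  proof -
    have "(1 + a / 2) ^ 2 \<le> exp (a / 2) ^ 2"
      using a1 by (intro power_mono) auto
    also have "exp (a / 2) ^ 2 = exp a" by (simp add: power2_eq_square exp_add[symmetric])
    finally have "1 + a + a ^ 2 / 4 \<le> exp a" by (simp add: power2_eq_square field_simps)
    moreover have "a * 1 \<le> a * a" using a1 by (intro mult_left_mono) auto
    ultimately have "a / 4 \<le> exp a - 1 - a" by (simp add: power2_eq_square)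
    then have A: "mb * (a / 4) \<le> mb * (exp a - 1 - a)" using mb by (intro mult_left_mono) auto
    have B: "mb * (a / 4) = k * ?V + mb / 4" using mb by (simp add: a_def field_simps)
    from A B have "k * ?V < mb * (exp a - 1 - a)" using mb by linarith
    then have "?V < mb * (exp a - 1 - a) / k" using k by (simp add: field_simps)
    moreover have "mb * (a / k) - mb * (exp a - 1) / k = - (mb * (exp a - 1 - a) / k)"
      using k by (simp add: field_simps)
    ultimately show ?thesis by (smt (verit))
  qed
  finally show ?thesis using m1 by blast
qed

lemma mustar_exists:
  assumes k: "0 < k" and mb: "0 < mb" and r: "0 < r"
  shows "\<exists>ms<0. hh k mb r ms = 0"
proof -
  obtain m1 where m1: "m1 < 0" "hh k mb r m1 < 0" using hh_neg_exists[OF k mb r] by blast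
  have "hh k mb r m1 \<le> 0" "0 \<le> hh k mb r 0" "m1 \<le> 0"
    using m1 V0_pos[OF k mb r] hh_0[of k mb r] by auto
  then obtain ms where ms: "m1 \<le> ms" "ms \<le> 0" "hh k mb r ms = 0"
    using IVT'[of "hh k mb r" m1 0 0] hh_cont[OF k mb, of m1 r] by blast
  have "ms \<noteq> 0" using ms(3) V0_pos[OF k mb r] hh_0[of k mb r] by auto
  then have "ms < 0" using ms(2) by linarith
  then show ?thesis using ms(3) by blast
qed



theorem theorem5p1:
  fixes k mb r :: real
  assumes "k > 0" and "mb > 0" and "r > 0"
  shows
    "(\<forall>mu x. mu \<ge> 0 \<and> x \<ge> 0 \<longrightarrow>
        value_fn r k mb x mu = ennreal (x + mb / r + (mu - mb) / (r + k)) \<and>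
        admissible k mb mu x (\<lambda>t. if t < 0 then 0 else x + integral {0..t} (mu_path k mb mu)) \<and>
        payoff r k mb mu x (\<lambda>t. if t < 0 then 0 else x + integral {0..t} (mu_path k mb mu))
          = value_fn r k mb x mu)
     \<and> (\<forall>mu x. mu < 0 \<and> x \<ge> 0 \<longrightarrow>
        (x < xb k mb mu \<longrightarrow> value_fn r k mb x mu = ennreal x) \<and>
        (x \<ge> xb k mb mu \<longrightarrow> value_fn r k mb x mu =
            ennreal (x + max 0 (exp (- r * tau0 k mb mu) * enn2real (value_fn r k mb 0 0) - xb k mb mu))))
     \<and> (\<exists>mustar < 0.
        (\<forall>mu x. mu \<le> mustar \<and> x \<ge> 0 \<longrightarrow> value_fn r k mb x mu = ennreal x) \<and>
        (\<forall>mu x. mu \<ge> mustar \<and> x \<ge> xb k mb mu \<longrightarrow>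
            admissible k mb mu x (barrier_strategy k mb mu x) \<and>
            payoff r k mb mu x (barrier_strategy k mb mu x) = value_fn r k mb x mu))"
proof -
  note k = assms(1) and mb = assms(2) and r = assms(3)
  let ?V = "mb / r + (0 - mb) / (r + k)"
  have Vp: "0 < ?V" using V0_pos[OF k mb r] .
  have V00: "enn2real (value_fn r k mb 0 0) = ?V"
    using part_a(3)[OF k mb r, of 0 0] Vp by simp
  have PA: "\<forall>mu x. mu \<ge> 0 \<and> x \<ge> 0 \<longrightarrow>
        value_fn r k mb x mu = ennreal (x + mb / r + (mu - mb) / (r + k)) \<and>
        admissible k mb mu x (\<lambda>t. if t < 0 then 0 else x + integral {0..t} (mu_path k mb mu)) \<and>
        payoff r k mb mu x (\<lambda>t. if t < 0 then 0 else x + integral {0..t} (mu_path k mb mu))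
          = value_fn r k mb x mu"
    using part_a[OF k mb r] by simp
  have large: "value_fn r k mb x mu = ennreal (x + max 0 (exp (- r * tau0 k mb mu) * ?V - xb k mb mu))"
    if "mu < 0" "xb k mb mu \<le> x" for mu x
  proof -
    interpret negmu k mb r mu using k mb r that(1) by unfold_locales
    have "max x (x - X + exp (- r * T) * ?V) = x + max 0 (exp (- r * T) * ?V - X)"
      by (simp add: max_def)
    then show ?thesis using value_large[OF that(2)] by simp
  qed
  have PB: "\<forall>mu x. mu < 0 \<and> x \<ge> 0 \<longrightarrow>
        (x < xb k mb mu \<longrightarrow> value_fn r k mb x mu = ennreal x) \<and>
        (x \<ge> xb k mb mu \<longrightarrow> value_fn r k mb x mu =
            ennreal (x + max 0 (exp (- r * tau0 k mb mu) * enn2real (value_fn r k mb 0 0) - xb k mb mu)))"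
  proof (intro allI impI conjI)
    fix mu x :: real assume a: "mu < 0 \<and> 0 \<le> x"
    interpret negmu k mb r mu using k mb r a by unfold_locales auto
    show "x < X \<Longrightarrow> value_fn r k mb x mu = ennreal x" using value_small a by simp
    show "X \<le> x \<Longrightarrow> value_fn r k mb x mu =
            ennreal (x + max 0 (exp (- r * T) * enn2real (value_fn r k mb 0 0) - X))"
      using large a V00 by simp
  qed
  obtain ms where ms: "ms < 0" "hh k mb r ms = 0" using mustar_exists[OF k mb r] by blast
  have PC: "(\<forall>mu x. mu \<le> ms \<and> x \<ge> 0 \<longrightarrow> value_fn r k mb x mu = ennreal x) \<and>
        (\<forall>mu x. mu \<ge> ms \<and> x \<ge> xb k mb mu \<longrightarrow>
            admissible k mb mu x (barrier_strategy k mb mu x) \<and>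
            payoff r k mb mu x (barrier_strategy k mb mu x) = value_fn r k mb x mu)"
  proof (rule conjI; intro allI impI)
    fix mu x :: real assume a: "mu \<le> ms \<and> 0 \<le> x"
    then have mu: "mu < 0" using ms by simp
    interpret negmu k mb r mu using k mb r mu by unfold_locales
    have h: "hh k mb r mu \<le> 0" using hh_mono[OF k mb r, of mu ms] a ms by simp
    show "value_fn r k mb x mu = ennreal x"
    proof (cases "x < X")
      case True then show ?thesis using value_small a by simp
    next
      case False
      then have "value_fn r k mb x mu = ennreal (x + max 0 (exp (- r * T) * ?V - X))"
        using large[OF mu] by simp
      moreover have "exp (- r * T) * ?V - X \<le> 0" using h hh_eq[OF k mb mu, of r] by simp
      ultimately show ?thesis by simp
    qed
  next
    fix mu x :: real assume a: "ms \<le> mu \<and> xb k mb mu \<le> x"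
    show "admissible k mb mu x (barrier_strategy k mb mu x) \<and>
          payoff r k mb mu x (barrier_strategy k mb mu x) = value_fn r k mb x mu"
    proof (cases "mu < 0")
      case True
      interpret negmu k mb r mu using k mb r True by unfold_locales
      have h: "0 \<le> hh k mb r mu" using hh_mono[OF k mb r, of ms mu] a ms True by simp
      then have h': "0 \<le> exp (- r * T) * ?V - X" using hh_eq[OF k mb True, of r] by simp
      have "value_fn r k mb x mu = ennreal (x + max 0 (exp (- r * T) * ?V - X))"
        using large[OF True] a by simp
      also have "\<dots> = payoff r k mb mu x (barrier_strategy k mb mu x)"
        using barrier_payoff a h' by (simp add: max_def algebra_simps)
      finally show ?thesis using barrier_adm a by simp
    next
      case False
      then have mu0: "0 \<le> mu" by simp
      have x0: "0 \<le> x" using a mu0 by (simp add: xb_def)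
      have "barrier_strategy k mb mu x = (\<lambda>t. if t < 0 then 0 else x + integral {0..t} (mu_path k mb mu))"
        using mu0 by (auto simp: fun_eq_iff barrier_strategy_def xb_def tau0_def min_def)
      then show ?thesis using PA mu0 x0 by simp
    qed
  qed
  show ?thesis using PA PB PC ms(1) by blast
qed

end
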